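(* For $i=1,\dots,d$ let $\omega_i\subseteq\mathbb{R}$ be a nonempty open interval and $f_i:\omega_i\to\mathbb{R}$ a univariate function of Legendre type. Let $\Omega'\subseteq\prod_{i=1}^d\omega_i$ be a nonempty open convex set and let $D'_F$ be the decomposable Bregman divergence on $\Omega'\times\Omega'$ generated by $F(x)=\sum_{i=1}^d f_i(x_i)$, i.e. $D'_F(x\|y)=F(x)-F(y)-\langle\nabla F(y),x-y\rangle$ for $x,y\in\Omega'$. Then $D'_F$ is the restriction to $\Omega'\times\Omega'$ of a Bregman divergence (generated by a function of Legendre type) defined on the axis-aligned box $\Omega=\prod_{i=1}^d\omega_i$.
   Context: A function $G:U\to\mathbb{R}$ on a nonempty open convex set $U\subseteq\mathbb{R}^k$ is of Legendre type if (I) it is differentiable, (II) it is strictly convex, and (III) if $\partial U$ is nonempty, then $\|\nabla G(x)\|\to\infty$ as $x\to\partial U$. The Bregman divergence generated by $G$ is $D_G(x\|y)=G(x)-G(y)-\langle\nabla G(y),x-y\rangle$ on $U\times U$. A decomposable Bregman divergence is one generated by $F(x)=\sum_{i=1}^d f_i(x_i)$ with each $f_i$ a univariate function of Legendre type; then $D_F(x\|y)=\sum_i D_{f_i}(x_i\|y_i)$. *)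

theory Defs
  imports "HOL-Analysis.Analysis"
begin

definition strictly_convex_on :: "'a::real_vector set \<Rightarrow> ('a \<Rightarrow> real) \<Rightarrow> bool" where
  "strictly_convex_on S G \<longleftrightarrow> convex S \<and>
     (\<forall>x\<in>S. \<forall>y\<in>S. x \<noteq> y \<longrightarrow> (\<forall>t::real. 0 < t \<and> t < 1 \<longrightarrow>
        G ((1 - t) *\<^sub>R x + t *\<^sub>R y) < (1 - t) * G x + t * G y))"

definition grad :: "('a::euclidean_space \<Rightarrow> real) \<Rightarrow> 'a \<Rightarrow> 'a" where
  "grad G x = (SOME g. (G has_derivative (\<lambda>h. g \<bullet> h)) (at x))"

definition legendre_type :: "'a::euclidean_space set \<Rightarrow> ('a \<Rightarrow> real) \<Rightarrow> bool" where
  "legendre_type U G \<longleftrightarrow>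
     U \<noteq> {} \<and> open U \<and> convex U \<and>
     (\<forall>x\<in>U. G differentiable (at x)) \<and>
     strictly_convex_on U G \<and>
     (\<forall>z\<in>frontier U. filterlim (\<lambda>x. norm (grad G x)) at_top (at z within U))"

definition bregman :: "('a::euclidean_space \<Rightarrow> real) \<Rightarrow> 'a \<Rightarrow> 'a \<Rightarrow> real" where
  "bregman G x y = G x - G y - grad G y \<bullet> (x - y)"

end

theory Submission
  imports Defs
begin

lemma grad_eqI:
  fixes G :: "'a::euclidean_space \<Rightarrow> real"
  assumes "(G has_derivative (\<lambda>h. g \<bullet> h)) (at x)"
  shows "grad G x = g"
proof -
  have ex: "(G has_derivative (\<lambda>h. grad G x \<bullet> h)) (at x)"
    unfolding grad_def by (rule someI[of _ g]) (rule assms)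
  have "(\<lambda>h. grad G x \<bullet> h) = (\<lambda>h. g \<bullet> h)"
    using has_derivative_unique[OF ex assms] .
  then have "grad G x \<bullet> (grad G x - g) = g \<bullet> (grad G x - g)" by metis
  then have "(grad G x - g) \<bullet> (grad G x - g) = 0" by (simp add: inner_diff_left)
  then show ?thesis by simp
qed

lemma grad_real:
  fixes f :: "real \<Rightarrow> real"
  assumes "f differentiable at t"
  shows "(f has_derivative (\<lambda>h. grad f t \<bullet> h)) (at t)"
proof -
  have "(f has_real_derivative deriv f t) (at t)"
    using assms DERIV_deriv_iff_real_differentiable by blast
  then have d: "(f has_derivative (\<lambda>h. deriv f t \<bullet> h)) (at t)"
    by (simp add: has_field_derivative_def)
  then have "grad f t = deriv f t" by (rule grad_eqI)
  then show ?thesis using d by simp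
qed

theorem lemma4:
  fixes \<omega> :: "'n::finite \<Rightarrow> real set"
    and f :: "'n \<Rightarrow> real \<Rightarrow> real"
    and \<Omega>' :: "(real ^ 'n) set"
  assumes intervals: "\<And>i. is_interval (\<omega> i) \<and> open (\<omega> i) \<and> \<omega> i \<noteq> {}"
    and leg: "\<And>i. legendre_type (\<omega> i) (f i)"
    and sub: "\<Omega>' \<subseteq> {x. \<forall>i. x $ i \<in> \<omega> i}"
    and ne: "\<Omega>' \<noteq> {}" and op: "open \<Omega>'" and cv: "convex \<Omega>'"
  shows "\<exists>G :: real ^ 'n \<Rightarrow> real.
           legendre_type {x. \<forall>i. x $ i \<in> \<omega> i} G \<and>
           (\<forall>x\<in>\<Omega>'. \<forall>y\<in>\<Omega>'.
              bregman (\<lambda>z. \<Sum>i\<in>UNIV. f i (z $ i)) x y = bregman G x y)"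
proof -
  define B where "B = {x::real^'n. \<forall>i. x $ i \<in> \<omega> i}"
  define F where "F = (\<lambda>z::real^'n. \<Sum>i\<in>UNIV. f i (z $ i))"
  have legi: "\<omega> i \<noteq> {}" "open (\<omega> i)" "convex (\<omega> i)" "\<And>t. t \<in> \<omega> i \<Longrightarrow> f i differentiable at t"
    "strictly_convex_on (\<omega> i) (f i)"
    "\<And>z. z \<in> frontier (\<omega> i) \<Longrightarrow> filterlim (\<lambda>x. norm (grad (f i) x)) at_top (at z within \<omega> i)"
    for i using leg[of i] unfolding legendre_type_def by auto
  have Bne: "B \<noteq> {}"
  proof -
    have "(\<chi> i. SOME t. t \<in> \<omega> i) \<in> B"
      unfolding B_def using legi(1) by (simp add: some_in_eq)
    then show ?thesis by blast
  qed
  have Bint: "B = (\<Inter>i\<in>UNIV. (\<lambda>x. x $ i) -` \<omega> i)" unfolding B_def by auto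
  have Bopen: "open B"
    unfolding Bint
    by (rule open_INT) (auto intro!: open_vimage legi(2) continuous_intros)
  have Bconv: "convex B"
    unfolding B_def convex_def
  proof (intro allI impI ballI, safe)
    fix x y :: "real^'n" and u v :: real and i
    assume "\<forall>i. x $ i \<in> \<omega> i" "\<forall>i. y $ i \<in> \<omega> i" "0 \<le> u" "0 \<le> v" "u + v = 1"
    then show "(u *\<^sub>R x + v *\<^sub>R y) $ i \<in> \<omega> i"
      using legi(3)[of i] unfolding convex_def by simp
  qed
  have Fder: "(F has_derivative (\<lambda>h. (\<chi> i. grad (f i) (x $ i)) \<bullet> h)) (at x)"
    if "x \<in> B" for x
  proof -
    have "((\<lambda>z. f i (z $ i)) has_derivative (\<lambda>h. grad (f i) (x $ i) * h $ i)) (at x)" for i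
    proof -
      have "(f i has_derivative (\<lambda>h. grad (f i) (x $ i) \<bullet> h)) (at (x $ i))"
        using grad_real legi(4) that unfolding B_def by blast
      moreover have "((\<lambda>z::real^'n. z $ i) has_derivative (\<lambda>h. h $ i)) (at x)"
        by (rule bounded_linear_imp_has_derivative[OF bounded_linear_vec_nth])
      ultimately have "((\<lambda>z. f i (z $ i)) has_derivative (\<lambda>h. grad (f i) (x $ i) \<bullet> h $ i)) (at x)"
        using has_derivative_compose by blast
      then show ?thesis by (simp add: inner_real_def)
    qed
    then have "(F has_derivative (\<lambda>h. \<Sum>i\<in>UNIV. grad (f i) (x $ i) * h $ i)) (at x)"
      unfolding F_def by (intro has_derivative_sum) auto
    then show ?thesis by (simp add: inner_vec_def inner_real_def)
  qed
  have gradF: "grad F x = (\<chi> i. grad (f i) (x $ i))" if "x \<in> B" for x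
    using grad_eqI[OF Fder[OF that]] .
  have Fconv: "F ((1 - t) *\<^sub>R x + t *\<^sub>R y) < (1 - t) * F x + t * F y"
    if hyp: "x \<in> B" "y \<in> B" "x \<noteq> y" "0 < t" "t < 1" for x y t
  proof -
    obtain j where j: "x $ j \<noteq> y $ j" using hyp(3) by (auto simp: vec_eq_iff)
    have le: "f i ((1 - t) * x $ i + t * y $ i) \<le> (1 - t) * f i (x $ i) + t * f i (y $ i)" for i
    proof (cases "x $ i = y $ i")
      case True
      then show ?thesis by (simp add: algebra_simps)
    next
      case False
      then show ?thesis using legi(5)[of i] hyp unfolding strictly_convex_on_def B_def
        by (auto intro!: less_imp_le)
    qed
    have lt: "f j ((1 - t) * x $ j + t * y $ j) < (1 - t) * f j (x $ j) + t * f j (y $ j)"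
      using legi(5)[of j] hyp j unfolding strictly_convex_on_def B_def by auto
    have "F ((1 - t) *\<^sub>R x + t *\<^sub>R y) = (\<Sum>i\<in>UNIV. f i ((1 - t) * x $ i + t * y $ i))"
      unfolding F_def by simp
    also have "\<dots> < (\<Sum>i\<in>UNIV. (1 - t) * f i (x $ i) + t * f i (y $ i))"
      by (rule sum_strict_mono_ex1) (use le lt in auto)
    also have "\<dots> = (1 - t) * F x + t * F y"
      unfolding F_def by (simp add: sum.distrib sum_distrib_left)
    finally show ?thesis .
  qed
  have Ffront: "filterlim (\<lambda>x. norm (grad F x)) at_top (at z within B)"
    if z: "z \<in> frontier B" for z
  proof -
    have zc: "z \<in> closure B" "z \<notin> B"
      using z Bopen by (auto simp: frontier_def interior_open)
    then obtain i where i: "z $ i \<notin> \<omega> i" unfolding B_def by auto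
    have "(\<lambda>x. x $ i) ` closure B \<subseteq> closure (\<omega> i)"
      by (rule image_closure_subset) (auto simp: B_def intro!: continuous_intros closure_subset[THEN subsetD])
    then have "z $ i \<in> closure (\<omega> i)" using zc by auto
    then have zf: "z $ i \<in> frontier (\<omega> i)"
      using i legi(2)[of i] by (simp add: frontier_def interior_open)
    have lim1: "filterlim (\<lambda>x. norm (grad (f i) x)) at_top (at (z $ i) within \<omega> i)"
      using legi(6)[OF zf] .
    have lim2: "filterlim (\<lambda>x. x $ i) (at (z $ i) within \<omega> i) (at z within B)"
    proof (rule filterlim_at_withinI)
      show "((\<lambda>x. x $ i) \<longlongrightarrow> z $ i) (at z within B)"
        by (intro tendsto_intros)
      show "\<forall>\<^sub>F x in at z within B. x $ i \<in> \<omega> i - {z $ i}"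
        unfolding eventually_at_filter using i by (auto simp: B_def intro!: always_eventually)
    qed
    have lim3: "filterlim (\<lambda>x. norm (grad (f i) (x $ i))) at_top (at z within B)"
      using filterlim_compose[OF lim1 lim2] by simp
    show ?thesis
    proof (rule filterlim_at_top_mono[OF lim3])
      show "\<forall>\<^sub>F x in at z within B. norm (grad (f i) (x $ i)) \<le> norm (grad F x)"
        unfolding eventually_at_filter
      proof (intro always_eventually allI impI)
        fix x assume "x \<in> B"
        have "norm (grad F x $ i) \<le> norm (grad F x)" by (rule Finite_Cartesian_Product.norm_nth_le)
        then show "norm (grad (f i) (x $ i)) \<le> norm (grad F x)"
          using gradF[OF \<open>x \<in> B\<close>] by simp
      qed
    qed
  qed
  have L: "legendre_type B F"
    unfolding legendre_type_def strictly_convex_on_def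
  proof (intro conjI ballI allI impI)
    fix x assume "x \<in> B"
    show "F differentiable at x" using Fder[OF \<open>x \<in> B\<close>] by (rule differentiableI)
  qed (use Bne Bopen Bconv Fconv Ffront in auto)
  show ?thesis
    using L unfolding B_def F_def by blast
qed

end
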